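(* Let $R$ be a ring with unity and involution $*$, and let $a\in R$. The following statements are equivalent. (1) $a$ is left dual core invertible. (2) $a$ is left dual $(a,a)$-core invertible. (3) $a$ is left dual $(a,1)$-core invertible. (4) $1$ is left dual $(a,a)$-core invertible. (5) $a$ is left dual $a$-core invertible. (6) $a$ is left dual $1$-core invertible. (7) $a$ is left $(a^*,a)$-invertible.
   Context: An element $a$ is left dual core invertible if there exists $x\in R$ with $axa=a$, $(xa)^*=xa$ and $x^2a=x$. For $u,b,c\in R$, $u$ is left dual $(b,c)$-core invertible if there exists $x\in Rc$ with $bxub=b$ and $(xub)^*=xub$. For $v\in R$, $a$ is left dual $v$-core invertible if there exists $x\in R$ with $axva=a$, $(xva)^*=xva$ and $x^2va=x$. For $u,b,c\in R$, $u$ is left $(b,c)$-invertible if $b\in Rcub$. *)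

theory Defs
  imports Main
begin

definition ring_involution :: "('a::ring_1 \<Rightarrow> 'a) \<Rightarrow> bool" where
  "ring_involution s \<longleftrightarrow>
     (\<forall>x y. s (x + y) = s x + s y) \<and>
     (\<forall>x y. s (x * y) = s y * s x) \<and>
     (\<forall>x. s (s x) = x)"

definition left_dual_core_invertible :: "('a::ring_1 \<Rightarrow> 'a) \<Rightarrow> 'a \<Rightarrow> bool" where
  "left_dual_core_invertible s a \<longleftrightarrow>
     (\<exists>x. a * x * a = a \<and> s (x * a) = x * a \<and> x ^ 2 * a = x)"

definition left_dual_bc_core_invertible :: "('a::ring_1 \<Rightarrow> 'a) \<Rightarrow> 'a \<Rightarrow> 'a \<Rightarrow> 'a \<Rightarrow> bool" where
  "left_dual_bc_core_invertible s u b c \<longleftrightarrow>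
     (\<exists>x. (\<exists>r. x = r * c) \<and> b * x * u * b = b \<and> s (x * u * b) = x * u * b)"

definition left_dual_v_core_invertible :: "('a::ring_1 \<Rightarrow> 'a) \<Rightarrow> 'a \<Rightarrow> 'a \<Rightarrow> bool" where
  "left_dual_v_core_invertible s v a \<longleftrightarrow>
     (\<exists>x. a * x * v * a = a \<and> s (x * v * a) = x * v * a \<and> x ^ 2 * v * a = x)"

definition left_bc_invertible :: "'a::ring_1 \<Rightarrow> 'a \<Rightarrow> 'a \<Rightarrow> bool" where
  "left_bc_invertible u b c \<longleftrightarrow> (\<exists>r. b = r * c * u * b)"

end

theory Submission
  imports Defs
begin

lemma inv_mult: "ring_involution s \<Longrightarrow> s (x * y) = s y * s x"
  unfolding ring_involution_def by blast

lemma inv_inv: "ring_involution s \<Longrightarrow> s (s x) = x"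
  unfolding ring_involution_def by blast

lemma seven_to_one:
  fixes s :: "'a::ring_1 \<Rightarrow> 'a"
  assumes inv: "ring_involution s" and h: "s a = r * a * a * s a"
  shows "left_dual_core_invertible s a"
proof -
  define t where "t = r * a * a"
  have ts: "t * s a = s a" using h by (simp add: t_def)
  have ast: "a * s t = a"
  proof -
    have "s (t * s a) = a * s t" by (simp add: inv_mult[OF inv] inv_inv[OF inv])
    then show ?thesis using ts by (simp add: inv_inv[OF inv])
  qed
  have tst: "t * s t = t"
  proof -
    have "t * s t = r * a * (a * s t)" by (simp add: t_def mult.assoc)
    then show ?thesis using ast by (simp add: t_def)
  qed
  have st: "s t = t"
  proof -
    have "s (t * s t) = s(s t) * s t" by (simp add: inv_mult[OF inv])
    also have "\<dots> = t * s t" by (simp add: inv_inv[OF inv])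
    finally show ?thesis using tst by simp
  qed
  show ?thesis unfolding left_dual_core_invertible_def
  proof (intro exI conjI)
    show "a * (r * a) * a = a" using ast st by (simp add: t_def mult.assoc)
    show "s (r * a * a) = r * a * a" using st by (simp add: t_def)
    have "r * a * r * a * a = r * (a * t)" by (simp add: t_def mult.assoc)
    also have "\<dots> = r * a" using ast st by simp
    finally show "(r * a) ^ 2 * a = r * a" by (simp add: power2_eq_square mult.assoc)
  qed
qed

lemma three_to_seven:
  fixes s :: "'a::ring_1 \<Rightarrow> 'a"
  assumes inv: "ring_involution s" and h1: "a * x * a * a = a" and h2: "s (x * a * a) = x * a * a"
  shows "left_bc_invertible a (s a) a"
proof -
  have "s a = s (a * (x * a * a))" using h1 by (simp add: mult.assoc)
  also have "\<dots> = x * a * a * s a" using h2 by (simp add: inv_mult[OF inv])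
  finally show ?thesis unfolding left_bc_invertible_def by blast
qed

lemma four_to_seven:
  fixes s :: "'a::ring_1 \<Rightarrow> 'a"
  assumes inv: "ring_involution s" and hx: "x = r * a" and h1: "a * x * a = a" and h2: "s (x * a) = x * a"
  shows "left_bc_invertible a (s a) a"
proof -
  have "s a = s (a * (x * a))" using h1 by (simp add: mult.assoc)
  also have "\<dots> = x * a * s a" using h2 by (simp add: inv_mult[OF inv])
  finally show ?thesis unfolding left_bc_invertible_def using hx by blast
qed

lemma one_facts:
  fixes s :: "'a::ring_1 \<Rightarrow> 'a"
  assumes inv: "ring_involution s" and h: "left_dual_core_invertible s a"
  shows "left_bc_invertible a (s a) a \<and> left_dual_bc_core_invertible s a a a
    \<and> left_dual_bc_core_invertible s 1 a a \<and> left_dual_v_core_invertible s a a"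
proof -
  obtain x where h1: "a * x * a = a" and h2: "s (x * a) = x * a" and h3: "x * x * a = x"
    using h unfolding left_dual_core_invertible_def by (auto simp: power2_eq_square)
  have xxaa: "x * x * a * a = x * a" using h3 by simp
  have "s a = s (a * (x * a))" using h1 by (simp add: mult.assoc)
  also have "\<dots> = x * a * s a" using h2 by (simp add: inv_mult[OF inv])
  also have "\<dots> = x * x * a * a * s a" using h3 by simp
  finally have c7: "left_bc_invertible a (s a) a" unfolding left_bc_invertible_def by blast
  have a2: "a * (x * x) * a * a = a" using xxaa h1 by (simp add: mult.assoc)
  have xx: "x * x = (x * x * x) * a" using h3 by (simp add: mult.assoc)
  have c2: "left_dual_bc_core_invertible s a a a"
    unfolding left_dual_bc_core_invertible_def
    apply (rule exI[of _ "x * x"])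
    apply (intro conjI)
      apply (rule exI[of _ "x * x * x"], rule xx)
    using a2 xxaa h2 by (auto simp: mult.assoc)
  have c4: "left_dual_bc_core_invertible s 1 a a"
    unfolding left_dual_bc_core_invertible_def
    apply (rule exI[of _ "x"])
    apply (intro conjI)
      apply (rule exI[of _ "x * x"], rule h3[symmetric])
    using h1 h2 by (auto simp: mult.assoc)
  have "x * x * x * x * a * a = x * x" using h3 by (simp add: mult.assoc)
  then have c5: "left_dual_v_core_invertible s a a"
    unfolding left_dual_v_core_invertible_def
    apply (intro exI[of _ "x * x"])
    using a2 xxaa h2 by (auto simp: mult.assoc power2_eq_square)
  show ?thesis using c7 c2 c4 c5 by blast
qed

theorem corollary3p6:
  fixes s :: "'a::ring_1 \<Rightarrow> 'a" and a :: 'a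
  assumes "ring_involution s"
  shows "(left_dual_core_invertible s a \<longleftrightarrow> left_dual_bc_core_invertible s a a a)
       \<and> (left_dual_core_invertible s a \<longleftrightarrow> left_dual_bc_core_invertible s a a 1)
       \<and> (left_dual_core_invertible s a \<longleftrightarrow> left_dual_bc_core_invertible s 1 a a)
       \<and> (left_dual_core_invertible s a \<longleftrightarrow> left_dual_v_core_invertible s a a)
       \<and> (left_dual_core_invertible s a \<longleftrightarrow> left_dual_v_core_invertible s 1 a)
       \<and> (left_dual_core_invertible s a \<longleftrightarrow> left_bc_invertible a (s a) a)"
proof -
  have s71: "left_bc_invertible a (s a) a \<Longrightarrow> left_dual_core_invertible s a"
    using seven_to_one[OF assms] unfolding left_bc_invertible_def by blast
  have s31: "left_dual_bc_core_invertible s a a 1 \<Longrightarrow> left_dual_core_invertible s a"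
    using three_to_seven[OF assms] s71 unfolding left_dual_bc_core_invertible_def
    by (metis mult.assoc)
  have s21: "left_dual_bc_core_invertible s a a a \<Longrightarrow> left_dual_bc_core_invertible s a a 1"
    unfolding left_dual_bc_core_invertible_def by auto
  have s41: "left_dual_bc_core_invertible s 1 a a \<Longrightarrow> left_dual_core_invertible s a"
    using four_to_seven[OF assms] s71 unfolding left_dual_bc_core_invertible_def
    by (metis mult.right_neutral)
  have s51: "left_dual_v_core_invertible s a a \<Longrightarrow> left_dual_bc_core_invertible s a a 1"
    unfolding left_dual_v_core_invertible_def left_dual_bc_core_invertible_def by auto
  have s6: "left_dual_v_core_invertible s 1 a \<longleftrightarrow> left_dual_core_invertible s a"
    unfolding left_dual_v_core_invertible_def left_dual_core_invertible_def by simp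
  show ?thesis using one_facts[OF assms] s71 s31 s21 s41 s51 s6 by blast
qed

end
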